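(* For integers $k\ge1$ let $Z_k$ have the Gamma distribution with shape $k$ and rate $k$, and for $\delta\in(0,1)$ let $V(k,\delta)=\inf\{y: \mathbb P(|Z_k-1|\le y)\ge 1-\delta/2\}$ be the $(1-\delta/2)$-quantile of $|Z_k-1|$. There exist universal constants $0<c_1\le 1$ and $0<c_2\le 2$ such that for all integers $k\ge1$ and all $\delta\in(0,1)$, $$V(k,\delta)\ge c_1\Bigl(\sqrt{\frac{0\vee\log(c_2/\delta)}{k}}+\frac{\log(c_2/\delta)}{k}\Bigr).$$ *)

theory Defs
  imports "HOL-Probability.Probability"
begin

text \<open>Law of Z_k ~ Gamma(shape k, rate k), as a measure on the reals.
  The library's erlang_density m l is the Gamma density with shape m+1 and rate l.\<close>
definition gamma_kk :: "nat \<Rightarrow> real measure" where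
  "gamma_kk k = density lborel (\<lambda>x. ennreal (erlang_density (k - 1) (real k) x))"

definition V :: "nat \<Rightarrow> real \<Rightarrow> real" where
  "V k \<delta> = Inf {y. measure (gamma_kk k) {x. \<bar>x - 1\<bar> \<le> y} \<ge> 1 - \<delta> / 2}"

end

theory Submission
  imports Defs
begin


lemma ln_lower:
  fixes x :: real assumes "0 \<le> x"
  shows "2*x/(2+x) \<le> ln (1+x)"
proof -
  let ?f = "\<lambda>t::real. ln (1+t) - 2*t/(2+t)"
  have "?f 0 \<le> ?f x"
  proof (rule DERIV_nonneg_imp_nondecreasing[of 0 x])
    fix t :: real assume t: "0 \<le> t" "t \<le> x"
    have "DERIV ?f t :> (1/(1+t) - (2*(2+t) - 2*t)/(2+t)^2)"
      using t by (auto intro!: derivative_eq_intros simp: power2_eq_square)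
    moreover have "0 \<le> 1/(1+t) - (2*(2+t) - 2*t)/(2+t)^2"
    proof -
      have "(2*(2+t) - 2*t)/(2+t)^2 = 4/(2+t)^2" by simp
      also have "\<dots> \<le> 1/(1+t)"
      proof -
        have "4*(1+t) \<le> (2+t)^2" by (simp add: power2_eq_square algebra_simps)
        then show ?thesis using t by (simp add: divide_simps)
      qed
      finally show ?thesis by simp
    qed
    ultimately show "\<exists>y. DERIV ?f t :> y \<and> 0 \<le> y" by blast
  qed (use assms in auto)
  then show ?thesis by simp
qed

lemma stirling_upper:
  fixes k :: nat assumes "1 \<le> k"
  shows "fact k * exp (real k) \<le> exp 1 * sqrt (real k) * real k ^ k"
  using assms
proof (induction k rule: dec_induct)
  case base then show ?case by simp
next
  case (step k)
  have k: "real k \<ge> 1" using step by simp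
  have "2 * (1/real k) / (2 + 1/real k) \<le> ln (1 + 1/real k)"
    by (rule ln_lower) simp
  moreover have "2 * (1/real k) / (2 + 1/real k) = 1 / (real k + 1/2)"
    using k by (simp add: field_simps)
  ultimately have h1: "1 \<le> (real k + 1/2) * ln (1 + 1/real k)"
    using k by (simp add: field_simps)
  have "0 < 1 + 1/real k" using k by (simp add: add_pos_nonneg)
  have "exp 1 \<le> exp ((real k + 1/2) * ln (1 + 1/real k))" using h1 by simp
  also have "\<dots> = (1 + 1/real k) powr (real k + 1/2)"
    using \<open>0 < 1 + 1/real k\<close> by (simp add: powr_def)
  also have "\<dots> = (1 + 1/real k) ^ k * sqrt (1 + 1/real k)"
    using k \<open>0 < 1 + 1/real k\<close> by (simp add: powr_add powr_realpow powr_half_sqrt add_pos_pos)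
  finally have e: "exp 1 \<le> (1 + 1/real k) ^ k * sqrt (1 + 1/real k)" .
  have "exp 1 * sqrt (real k) * real k ^ k \<le> (1 + 1/real k) ^ k * sqrt (1 + 1/real k) * (sqrt (real k) * real k ^ k)"
    using mult_right_mono[OF e, of "sqrt (real k) * real k ^ k"] by (simp add: mult.assoc)
  also have "\<dots> = ((1 + 1/real k) * real k) ^ k * sqrt ((1 + 1/real k) * real k)"
    by (simp add: power_mult_distrib real_sqrt_mult)
  also have "\<dots> = (real k + 1) ^ k * sqrt (real k + 1)"
  proof -
    have "(1+1/real k)*real k = real k + 1" using k by (simp add: field_simps)
    then show ?thesis by simp
  qed
  finally have key: "exp 1 * sqrt (real k) * real k ^ k \<le> (real k + 1) ^ k * sqrt (real k + 1)" .
  have "fact (Suc k) * exp (real (Suc k)) = (real k + 1) * exp 1 * (fact k * exp (real k))"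
    by (simp add: exp_add algebra_simps)
  also have "\<dots> \<le> (real k + 1) * exp 1 * (exp 1 * sqrt (real k) * real k ^ k)"
    using step.IH by (intro mult_left_mono) auto
  also have "\<dots> \<le> (real k + 1) * exp 1 * ((real k + 1) ^ k * sqrt (real k + 1))"
    using key by (intro mult_left_mono) auto
  also have "\<dots> = exp 1 * sqrt (real (Suc k)) * real (Suc k) ^ Suc k"
    by (simp add: algebra_simps)
  finally show ?case .
qed

lemma fact_ratio_nat: "n \<le> k \<Longrightarrow> (n+1)^(k-n) * fact n \<le> (fact k :: nat)"
proof (induction k)
  case 0 then show ?case by simp
next
  case (Suc k)
  show ?case
  proof (cases "n = Suc k")
    case True then show ?thesis by simp
  next
    case False
    then have nk: "n \<le> k" using Suc by simp
    then have "(n+1)^(Suc k - n) * fact n = (n+1) * ((n+1)^(k-n) * fact n)"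
      by (simp add: Suc_diff_le algebra_simps)
    also have "\<dots> \<le> (n+1) * fact k" using Suc.IH[OF nk] by (simp add: add_mono)
    also have "\<dots> \<le> (Suc k) * fact k" using nk by (intro mult_right_mono) auto
    finally show ?thesis by simp
  qed
qed



lemma t1: fixes a::real assumes a0: "0 \<le> a" shows "a/(1+a) \<le> 2*a/(2+a)"
proof -
  have "a*(2+a) \<le> 2*a*(1+a)" using a0 by (simp add: algebra_simps power2_eq_square)
  then show ?thesis using a0 by (simp add: frac_le divide_le_eq le_divide_eq mult.commute) 
qed
lemma t3: fixes a k::real assumes a0: "0 \<le> a" shows "k * (a/(1+a)) - k * a = - k * (a^2/(1+a))"
proof -
  have "1 + a \<noteq> 0" using a0 by simp
  then show ?thesis by (simp add: field_simps power2_eq_square)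
qed
lemma t2: fixes s a::real assumes s0: "0 \<le> s" and a_eq: "a = (s+s^2)/10" and h: "(s+s^2)^2 \<le> 2 * s^2 * (10+s+s^2)"
  shows "a^2/(1+a) \<le> s^2/5"
proof -
  have p: "0 < 10+s+s^2" using s0 by (simp add: add_pos_nonneg)
  have e1: "1+a = (10+s+s^2)/10" by (simp add: a_eq field_simps)
  have e2: "a^2 = (s+s^2)^2/100" by (simp add: a_eq power_divide)
  have "a^2/(1+a) = (s+s^2)^2/(10*(10+s+s^2))" unfolding e1 e2 using p by (simp add: field_simps)
  also have "\<dots> \<le> s^2/5" using h p by (simp add: divide_le_eq) (simp add: algebra_simps)
  finally show ?thesis .
qed

lemma lin_aux: fixes A R X B C L :: real shows "0 \<le> L \<Longrightarrow> A - R \<le> X \<Longrightarrow> A - B = -C \<Longrightarrow> C \<le> L/5 \<Longrightarrow> R \<le> 3/20*(1+2*L) \<Longrightarrow> -1-L \<le> -B + X"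
  by (simp add: field_simps)

lemma exponent_bound:
  fixes k r :: nat and L :: real
  assumes k1: "1 \<le> k" and L: "0 < L" and rk: "r \<le> k"
    and r_lt: "real r \<le> sqrt (real k) / 2 + 1"
  defines "a \<equiv> (1/10) * (sqrt (L/real k) + L/real k)"
  shows "-1 - L \<le> - real k * a + real (k - r) * ln (1 + a)"
proof -
  define s where "s = sqrt (L / real k)"
  have kp: "real k \<ge> 1" using k1 by simp
  have s0: "0 \<le> s" using L kp by (simp add: s_def)
  have s2: "s^2 = L / real k" using L kp by (simp add: s_def)
  have a_eq: "a = (s + s^2)/10" unfolding a_def s_def[symmetric] s2[symmetric] using s0 by simp
  have a0: "0 \<le> a" using s0 by (simp add: a_eq)
  have sqk: "1 \<le> sqrt (real k)" using kp by simp
  have lnlow: "a/(1+a) \<le> ln (1+a)"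
  proof -
    have "a/(1+a) \<le> 2*a/(2+a)" using a0 by (rule t1)
    also have "\<dots> \<le> ln (1+a)" by (rule ln_lower[OF a0])
    finally show ?thesis .
  qed
  have lnup: "ln (1+a) \<le> a" using a0 by (rule ln_add_one_self_le_self)
  have ln0: "0 \<le> ln (1+a)" using a0 by simp
  have "real (k - r) * ln (1+a) = real k * ln (1+a) - real r * ln (1+a)"
    using rk by (simp add: of_nat_diff algebra_simps)
  also have "\<dots> \<ge> real k * (a/(1+a)) - real r * a"
    using lnlow lnup kp by (intro diff_mono mult_left_mono) auto
  finally have h1: "real (k - r) * ln (1+a) \<ge> real k * (a/(1+a)) - real r * a" .
  have h2: "a^2/(1+a) \<le> s^2/5"
  proof -
    have "(s+s^2)^2 \<le> 2 * s^2 * (10+s+s^2)"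
    proof -
      have "(s + s^2)^2 = s^2 * (1 + 2 * s + s^2)" by (simp add: power2_eq_square algebra_simps)
      also have "\<dots> \<le> s^2 * (20 + 2 * s + 2 * s^2)" by (intro mult_left_mono) (auto simp: s0)
      finally show ?thesis by (simp add: algebra_simps)
    qed
    then show ?thesis using s0 a_eq by (intro t2)
  qed
  have h3: "real k * (a/(1+a)) - real k * a = - real k * (a^2/(1+a))"
    using a0 by (rule t3)
  have h4: "real k * (a^2/(1+a)) \<le> L/5"
  proof -
    have "real k * (a^2/(1+a)) \<le> real k * (s^2/5)" using h2 kp by (intro mult_left_mono) auto
    also have "\<dots> = L/5" using kp by (simp add: s2)
    finally show ?thesis .
  qed
  have h5: "real r * a \<le> 3/20 * (1 + 2*L)"
  proof -
    have r1: "real r * a \<le> (3/2 * sqrt (real k)) * a"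
      using r_lt sqk a0 by (intro mult_right_mono) linarith+
    have sk2: "sqrt (real k) * sqrt (real k) = real k" using kp by simp
    have e1: "sqrt (real k) * s = sqrt L" using kp L by (simp add: s_def real_sqrt_divide)
    have e2: "sqrt (real k) * s^2 = L / sqrt (real k)"
    proof -
      have "sqrt (real k) * s^2 = sqrt (real k) * L / (sqrt (real k) * sqrt (real k))"
        by (simp add: s2 sk2)
      also have "\<dots> = L / sqrt (real k)" using sqk by (simp add: field_simps)
      finally show ?thesis .
    qed
    have e3: "sqrt (real k) * a = (sqrt L + L / sqrt (real k)) / 10"
      by (simp add: a_eq distrib_left e1 e2 add_divide_distrib)
    have b1: "L / sqrt (real k) \<le> L" using sqk L by (simp add: divide_le_eq)
    have b2: "sqrt L \<le> 1 + L"
    proof (cases "L \<le> 1")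
      case True then have "sqrt L \<le> 1" by simp
      then show ?thesis using L by linarith
    next
      case False
      then have "sqrt L \<le> sqrt (L * L)" by (intro real_sqrt_le_mono) simp
      also have "\<dots> = L" using L by simp
      finally show ?thesis by simp
    qed
    have "(3/2 * sqrt (real k)) * a = 3/20 * (sqrt L + L / sqrt (real k))"
    proof -
      have "(3/2 * sqrt (real k)) * a = 3/2 * (sqrt (real k) * a)" by (simp only: mult.assoc)
      then show ?thesis unfolding e3 by simp
    qed
    moreover have "3/20 * (sqrt L + L / sqrt (real k)) \<le> 3/20 * (1 + 2*L)" using b1 b2 by simp
    ultimately show ?thesis using r1 by (metis order_trans)
  qed
  have h3': "real k * (a/(1+a)) - real k * a = - (real k * (a^2/(1+a)))" using h3 by simp
  have h6: "- real k * a = - (real k * a)" by simp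
  show ?thesis unfolding h6 using L by (intro lin_aux[OF _ h1 h3' h4 h5]) simp
qed



lemma term_bound:
  fixes lam c :: real and n k r :: nat
  assumes nr: "k - r \<le> n" and nk: "n \<le> k" and c0: "0 < c" and cn: "c \<le> real n + 1" and cl: "c \<le> lam"
  shows "exp (-lam) * lam^k / fact k * (c/lam)^r \<le> lam^n * exp (-lam) / fact n"
proof -
  have lam0: "0 < lam" using c0 cl by simp
  define b where "b = c / lam"
  have b0: "0 \<le> b" using c0 lam0 by (simp add: b_def)
  have b1: "b \<le> 1" using cl lam0 by (simp add: b_def)
  have knr: "k - n \<le> r" using nr nk by simp
  have "b^r \<le> b^(k-n)" using b0 b1 knr by (intro power_decreasing)
  have lk: "lam^k = lam^n * lam^(k-n)" using nk by (simp flip: power_add)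
  have lb: "lam^(k-n) * b^(k-n) = c^(k-n)" using lam0 by (simp add: b_def flip: power_mult_distrib)
  have cpow: "c^(k-n) \<le> (real n + 1)^(k-n)" using c0 cn by (intro power_mono) auto
  have fr: "(real n + 1)^(k-n) * fact n \<le> (fact k :: real)"
  proof -
    have "(n+1)^(k-n) * fact n \<le> (fact k :: nat)" by (rule fact_ratio_nat[OF nk])
    then have "real ((n+1)^(k-n) * fact n) \<le> real (fact k)" by (simp only: of_nat_le_iff)
    then show ?thesis by (simp add: add.commute)
  qed
  have fk0: "0 < (fact k :: real)" by simp
  have fn0: "0 < (fact n :: real)" by simp
  have "exp (-lam) * lam^k / fact k * b^r \<le> exp (-lam) * lam^k / fact k * b^(k-n)"
    using \<open>b^r \<le> b^(k-n)\<close> lam0 by (intro mult_left_mono) auto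
  also have "\<dots> = exp (-lam) * lam^n * (lam^(k-n) * b^(k-n)) / fact k" by (simp add: lk)
  also have "\<dots> = exp (-lam) * lam^n * c^(k-n) / fact k" by (simp add: lb)
  also have "\<dots> \<le> exp (-lam) * lam^n * (real n + 1)^(k-n) / fact k"
    using cpow lam0 by (intro divide_right_mono mult_left_mono) auto
  also have "\<dots> \<le> lam^n * exp (-lam) / fact n"
  proof -
    have "(real n + 1)^(k-n) / fact k \<le> 1 / fact n" using fr fk0 fn0 by (simp add: divide_simps)
    then have "exp (-lam) * lam^n * ((real n + 1)^(k-n) / fact k) \<le> exp (-lam) * lam^n * (1 / fact n)"
      using lam0 by (intro mult_left_mono) auto
    then show ?thesis by (simp add: mult.commute)
  qed
  finally show ?thesis by (simp add: b_def)
qed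

lemma tail_bound:
  fixes k :: nat and L :: real
  assumes k1: "1 \<le> k" and L: "0 < L"
  defines "a \<equiv> (1/10) * (sqrt (L/real k) + L/real k)"
  shows "exp (-L) / 100 \<le> (\<Sum>n\<le>k-1. (real k * (1+a))^n * exp (- (real k * (1+a))) / fact n)"
proof -
  define x where "x = 1 + a"
  define lam where "lam = real k * x"
  define r where "r = nat \<lceil>sqrt (real k) / 2\<rceil>"
  have kp: "real k \<ge> 1" using k1 by simp
  have a0: "0 \<le> a" using L kp by (simp add: a_def)
  have x1: "1 \<le> x" using a0 by (simp add: x_def)
  have lamk: "real k \<le> lam" using x1 kp by (simp add: lam_def)
  have lam0: "0 < lam" using lamk kp by simp
  have sqk: "1 \<le> sqrt (real k)" using kp by simp
  have sqkk: "sqrt (real k) \<le> real k"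
  proof -
    have "sqrt (real k) * 1 \<le> sqrt (real k) * sqrt (real k)" using sqk by (intro mult_left_mono) auto
    then show ?thesis using kp by simp
  qed
  have c0: "0 \<le> \<lceil>sqrt (real k) / 2\<rceil>" using sqk by (simp, linarith)
  have rr: "real r = of_int \<lceil>sqrt (real k) / 2\<rceil>" unfolding r_def using c0 by simp
  have r_ge: "sqrt (real k) / 2 \<le> real r" unfolding rr by (rule le_of_int_ceiling)
  have r_lt: "real r \<le> sqrt (real k) / 2 + 1" unfolding rr by (rule of_int_ceiling_le_add_one)
  have "0 < real r" using r_ge sqk by linarith
  then have r1: "1 \<le> r" by simp
  have rk: "r \<le> k" using r_lt sqkk kp by linarith
  define c where "c = real (k - r) + 1"
  have c_eq: "c = real k - real r + 1" using rk by (simp add: c_def of_nat_diff)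
  have c0: "0 < c" by (simp add: c_def add_nonneg_pos)
  have clam: "c \<le> lam" using c_eq r1 lamk by simp
  define B where "B = exp (-lam) * lam^k / fact k * (c/lam)^r"
  have tb: "\<And>n. n \<in> {k-r..<k} \<Longrightarrow> B \<le> lam^n * exp (-lam) / fact n"
  proof -
    fix n assume n: "n \<in> {k-r..<k}"
    then have "k - r \<le> n" "n \<le> k" by auto
    moreover have "c \<le> real n + 1"
    proof -
      have "real (k - r) \<le> real n" using \<open>k - r \<le> n\<close> by (simp only: of_nat_le_iff)
      then show ?thesis unfolding c_def by linarith
    qed
    ultimately show "B \<le> lam^n * exp (-lam) / fact n" unfolding B_def
      using c0 clam by (intro term_bound) auto
  qed
  have cardr: "card {k-r..<k} = r" using rk by simp
  have "real r * B \<le> (\<Sum>n\<in>{k-r..<k}. lam^n * exp (-lam) / fact n)"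
    using sum_bounded_below[of "{k-r..<k}" B "\<lambda>n. lam^n * exp (-lam) / fact n"] tb cardr by simp
  also have "\<dots> \<le> (\<Sum>n\<le>k-1. lam^n * exp (-lam) / fact n)"
    using k1 lam0 by (intro sum_mono2) auto
  also have "\<dots> = (\<Sum>n\<le>k-1. (real k * (1+a))^n * exp (- (real k * (1+a))) / fact n)"
    by (simp add: lam_def x_def)
  finally have sumB: "real r * B \<le> (\<Sum>n\<le>k-1. (real k * (1+a))^n * exp (- (real k * (1+a))) / fact n)" .
  define q0 where "q0 = c / real k"
  have q00: "0 \<le> q0" using c0 kp by (simp add: q0_def)
  have cq: "c = real k * q0" using kp by (simp add: q0_def)
  have pw: "lam^k * (c/lam)^r = real k ^ k * x^(k-r) * q0^r"
  proof -
    have "lam^k = lam^(k-r) * lam^r" using rk by (simp flip: power_add)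
    then have "lam^k * (c/lam)^r = lam^(k-r) * c^r" using lam0 by (simp add: power_divide)
    also have "\<dots> = real k^(k-r) * real k^r * x^(k-r) * q0^r"
      by (simp add: lam_def cq power_mult_distrib)
    also have "real k^(k-r) * real k^r = real k ^ k" using rk by (simp flip: power_add)
    finally show ?thesis by simp
  qed
  have ex: "exp (-lam) = exp (- real k) * exp (- real k * a)"
    by (simp add: lam_def x_def distrib_left flip: exp_add)
  define Q where "Q = exp (- real k * a) * x^(k-r) * q0^r"
  have Q0: "0 \<le> Q" using q00 x1 by (simp add: Q_def)
  have BQ: "B = Q * (real k ^ k * exp (- real k) / fact k)"
  proof -
    have "B = exp (-lam) * (lam^k * (c/lam)^r) / fact k" by (simp add: B_def)
    also have "\<dots> = Q * (real k ^ k * exp (- real k) / fact k)" by (simp add: pw ex Q_def)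
    finally show ?thesis .
  qed
  have st: "1 / (exp 1 * sqrt (real k)) \<le> real k ^ k * exp (- real k) / fact k"
  proof -
    have "fact k * exp (real k) \<le> exp 1 * sqrt (real k) * real k ^ k" by (rule stirling_upper[OF k1])
    then show ?thesis using sqk by (simp add: divide_simps exp_minus) (simp add: mult.commute mult.left_commute)
  qed
  have rB: "real r * B \<ge> Q / (2 * exp 1)"
  proof -
    have "real r * B \<ge> real r * (Q * (1 / (exp 1 * sqrt (real k))))"
      unfolding BQ using st Q0 by (intro mult_left_mono) auto
    moreover have "real r * (Q * (1 / (exp 1 * sqrt (real k)))) = (real r / sqrt (real k)) * (Q / exp 1)"
      by simp
    moreover have "real r / sqrt (real k) \<ge> 1/2" using r_ge sqk by (simp add: divide_simps)
    then have "1/2 * (Q / exp 1) \<le> real r / sqrt (real k) * (Q / exp 1)"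
      using Q0 by (intro mult_right_mono) auto
    moreover have "Q / (2 * exp 1) = 1/2 * (Q / exp 1)" by simp
    ultimately show ?thesis by linarith
  qed
  have qb: "q0^r \<ge> 1/4"
  proof -
    have "q0 = 1 + (- ((real r - 1) / real k))" using kp by (simp add: q0_def c_eq field_simps)
    moreover have "-1 \<le> - ((real r - 1) / real k)" using rk kp by (simp add: divide_simps)
    ultimately have "1 + real r * (- ((real r - 1) / real k)) \<le> q0^r"
      using Bernoulli_inequality[of "- ((real r - 1) / real k)" r] by simp
    moreover have "real r * (real r - 1) \<le> 3/4 * real k"
    proof -
      have "real r * (real r - 1) \<le> (sqrt (real k)/2 + 1) * (sqrt (real k) / 2)"
        using r_lt r1 by (intro mult_mono) auto
      also have "\<dots> = real k / 4 + sqrt (real k) / 2" using kp by (simp add: algebra_simps)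
      also have "\<dots> \<le> 3/4 * real k" using sqkk by simp
      finally show ?thesis .
    qed
    then have "real r * ((real r - 1) / real k) \<le> 3/4" using kp by (simp add: divide_simps)
    ultimately show ?thesis by simp
  qed
  have eb: "exp (- real k * a) * x^(k-r) \<ge> exp (-1 - L)"
  proof -
    have "exp (- real k * a) * x^(k-r) = exp (- real k * a + real (k-r) * ln (1+a))"
    proof -
      have "(1+a)^(k-r) = exp (real (k-r) * ln (1+a))" using a0 by (simp add: exp_of_nat_mult)
      then show ?thesis by (simp add: x_def exp_diff exp_minus field_simps)
    qed
    moreover have "-1 - L \<le> - real k * a + real (k-r) * ln (1+a)"
      unfolding a_def by (rule exponent_bound[OF k1 L rk r_lt])
    ultimately show ?thesis by simp
  qed
  have Qb: "Q \<ge> exp (-1 - L) / 4"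
  proof -
    have "Q \<ge> exp (-1 - L) * (1/4)" unfolding Q_def
      using eb qb x1 by (intro mult_mono) auto
    then show ?thesis by simp
  qed
  have "exp (-L) / 100 \<le> exp (-1 - L) / 4 / (2 * exp 1)"
  proof -
    have e1: "exp (-1 - L) / 4 / (2 * exp 1) = exp (-L) / (8 * (exp 1 * exp 1))"
      by (simp add: exp_diff exp_minus field_simps)
    have "exp 1 * exp 1 \<le> 3 * (3::real)" by (rule mult_mono[OF exp_le exp_le]) auto
    then have "8 * (exp 1 * exp 1) \<le> (100::real)" by simp
    then have "exp (-L) / 100 \<le> exp (-L) / (8 * (exp 1 * exp 1))"
      by (intro divide_left_mono) auto
    then show ?thesis by (simp only: e1)
  qed
  also have "\<dots> \<le> Q / (2 * exp 1)" using Qb by (intro divide_right_mono) auto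
  also have "\<dots> \<le> real r * B" by (rule rB)
  also note sumB
  finally show ?thesis .
qed


lemma main_bound:
  fixes k :: nat and \<delta> :: real
  assumes k1: "1 \<le> k" and d0: "0 < \<delta>" and d1: "\<delta> < 1"
  shows "1/10 * (sqrt (max 0 (ln ((1/100)/\<delta>)) / real k) + ln ((1/100)/\<delta>)/real k) \<le> V k \<delta>"
proof -
  define M where "M = gamma_kk k"
  have kp: "0 < real k" using k1 by simp
  have PS: "prob_space M" unfolding M_def gamma_kk_def
    using prob_space_erlang_density[OF kp, of "k-1"] by simp
  interpret P: prob_space M by (rule PS)
  have setsM: "sets M = sets borel" by (simp add: M_def gamma_kk_def)
  have cdf: "\<And>t. measure M {..t} = erlang_CDF (k-1) (real k) t"
  proof -
    fix t :: real
    have "emeasure M {..t} = erlang_CDF (k-1) (real k) t"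
      unfolding M_def gamma_kk_def using emeasure_erlang_density[OF kp, of "k-1" t] by simp
    then show "measure M {..t} = erlang_CDF (k-1) (real k) t"
      using erlang_CDF_nonneg[OF kp] by (simp add: P.emeasure_eq_measure)
  qed
  have atM: "\<And>t. {..t} \<in> sets M" using setsM by simp
  have meas: "\<And>y. {x. \<bar>x-1\<bar> \<le> y} \<in> sets M"
  proof -
    fix y :: real
    have "{x::real. \<bar>x-1\<bar> \<le> y} = {1-y..1+y}" by auto
    then show "{x. \<bar>x-1\<bar> \<le> y} \<in> sets M" using setsM by simp
  qed
  define S where "S = {y. measure M {x. \<bar>x-1\<bar> \<le> y} \<ge> 1 - \<delta>/2}"
  have V_eq: "V k \<delta> = Inf S" by (simp add: V_def S_def M_def)
  define T where "T = (\<lambda>t. \<Sum>n\<le>k-1. (real k * t)^n * exp (- (real k * t)) / fact n)"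
  have cdfT: "\<And>t. 0 \<le> t \<Longrightarrow> erlang_CDF (k-1) (real k) t = 1 - T t"
    by (simp add: erlang_CDF_def T_def)
  have Sne: "S \<noteq> {}"
  proof -
    have lk: "filterlim (\<lambda>t. real k * t) at_top at_top"
      using filterlim_tendsto_pos_mult_at_top[OF tendsto_const kp filterlim_ident] by simp
    have "(T \<longlongrightarrow> 0) at_top"
    proof -
      have "((\<lambda>t. \<Sum>n\<le>k-1. ((real k * t)^n / exp (real k * t)) / fact n) \<longlongrightarrow> (\<Sum>n\<le>k-1. 0 / fact n)) at_top"
        by (intro tendsto_intros filterlim_compose[OF tendsto_power_div_exp_0 lk]) simp
      then show ?thesis by (simp add: T_def exp_minus field_simps)
    qed
    then have "eventually (\<lambda>t. T t < \<delta>/2) at_top" using d0 by (intro order_tendstoD(2)) auto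
    then obtain N where N: "\<And>t. t \<ge> N \<Longrightarrow> T t < \<delta>/2" by (auto simp: eventually_at_top_linorder)
    define t where "t = max N 2"
    have t2: "t \<ge> 2" and Tt: "T t < \<delta>/2" using N by (auto simp: t_def)
    have sub: "{..t} - {..0} \<subseteq> {x. \<bar>x-1\<bar> \<le> t - 1}" using t2 by auto
    have "measure M ({..t} - {..0}) = measure M {..t} - measure M {..0}"
      using atM t2 by (intro P.finite_measure_Diff) auto
    also have "\<dots> = 1 - T t" using cdf cdfT t2 by (simp add: erlang_CDF_at0)
    finally have "1 - T t \<le> measure M {x. \<bar>x-1\<bar> \<le> t - 1}"
      using P.finite_measure_mono[OF sub meas] by simp
    then have "t - 1 \<in> S" using Tt by (simp add: S_def)
    then show ?thesis by auto
  qed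
  have S0: "\<And>y. y \<in> S \<Longrightarrow> 0 \<le> y"
  proof (rule ccontr)
    fix y assume y: "y \<in> S" "\<not> 0 \<le> y"
    then have "{x::real. \<bar>x-1\<bar> \<le> y} = {}" by auto
    then show False using y d1 by (simp add: S_def)
  qed
  define L where "L = ln ((1/100)/\<delta>)"
  show ?thesis
  proof (cases "L \<le> 0")
    case True
    then have "1/10 * (sqrt (max 0 L / real k) + L/real k) \<le> 0" using kp by (simp add: divide_nonpos_pos)
    also have "0 \<le> Inf S" using Sne S0 by (intro cInf_greatest) auto
    finally show ?thesis by (simp add: V_eq L_def)
  next
    case False
    then have L0: "0 < L" by simp
    define a where "a = (1/10) * (sqrt (L/real k) + L/real k)"
    have a0: "0 \<le> a" using L0 kp by (simp add: a_def)
    have tb: "exp (-L) / 100 \<le> T (1+a)"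
      unfolding T_def a_def by (rule tail_bound[OF k1 L0])
    have eL: "exp (-L) / 100 = \<delta>"
      using d0 by (simp add: L_def exp_minus)
    have "a \<le> Inf S"
    proof (rule cInf_greatest[OF Sne])
      fix y assume y: "y \<in> S"
      show "a \<le> y"
      proof (rule ccontr)
        assume "\<not> a \<le> y"
        then have sub: "{x. \<bar>x-1\<bar> \<le> y} \<subseteq> {..1+a}" by auto
        have "measure M {x. \<bar>x-1\<bar> \<le> y} \<le> measure M {..1+a}"
          using P.finite_measure_mono[OF sub atM] .
        also have "\<dots> = 1 - T (1+a)" using cdf cdfT a0 by simp
        also have "\<dots> \<le> 1 - \<delta>" using tb eL by simp
        finally show False using y d0 by (simp add: S_def)
      qed
    qed
    moreover have "max 0 L = L" using L0 by simp
    ultimately show ?thesis unfolding V_eq L_def[symmetric] by (simp add: a_def)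
  qed
qed

theorem lemma5:
  shows "\<exists>c1 c2::real. 0 < c1 \<and> c1 \<le> 1 \<and> 0 < c2 \<and> c2 \<le> 2 \<and>
    (\<forall>k::nat. k \<ge> 1 \<longrightarrow> (\<forall>\<delta>::real. 0 < \<delta> \<and> \<delta> < 1 \<longrightarrow>
       V k \<delta> \<ge> c1 * (sqrt (max 0 (ln (c2 / \<delta>)) / real k) + ln (c2 / \<delta>) / real k)))"
proof -
  have H: "\<forall>k::nat. k \<ge> 1 \<longrightarrow> (\<forall>\<delta>::real. 0 < \<delta> \<and> \<delta> < 1 \<longrightarrow>
       V k \<delta> \<ge> (1/10) * (sqrt (max 0 (ln ((1/100) / \<delta>)) / real k) + ln ((1/100) / \<delta>) / real k))"
    using main_bound by blast
  show ?thesis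
    by (rule exI[of _ "1/10"], rule exI[of _ "1/100"], intro conjI, simp, simp, simp, simp, rule H)
qed

end
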